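(* Let $H=(V,E,w)$ be a hypergraph and let $L,R\subset V$ be disjoint sets with $\mathrm{vol}(L\cup R)>0$. Then $$\gamma_1\le 2\beta_H(L,R),$$ where $\gamma_1=\min\{D(f): f\in\mathbb{R}^n,\ \sum_{v}\deg(v)f(v)^2>0\}$ and $D(f)=\frac{\sum_{e\in E}w(e)\big(\max_{u\in e}f(u)+\min_{v\in e}f(v)\big)^2}{\sum_{v\in V}\deg(v)f(v)^2}$.
   Context: A hypergraph $H=(V,E,w)$ has vertex set $V$ with $|V|=n$, hyperedges $E$ (subsets of $V$), weights $w:E\to\mathbb{R}_{>0}$; $\deg(v)=\sum_{e\ni v}w(e)$, $\mathrm{vol}(S)=\sum_{v\in S}\deg(v)$. For $A,B,C\subseteq V$, $w(A,B\mid C)=\sum_{e\in E}w(e)[e\cap A\ne\emptyset\wedge e\cap B\ne\emptyset\wedge e\cap C=\emptyset]$ and $w(A\mid C)=w(A,A\mid C)$. Writing $\overline{X}=V\setminus X$, the bipartiteness ratio of disjoint $L,R$ is $\beta_H(L,R)=\frac{2w(L\mid\overline{L})+2w(R\mid\overline{R})+w(L,\overline{L\cup R}\mid R)+w(R,\overline{L\cup R}\mid L)}{\mathrm{vol}(L\cup R)}$. The quantity $\gamma_1$ is the smallest eigenvalue of the paper's hypergraph operator $D_H^{-1}J_H$. *)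

theory Defs
  imports "HOL-Analysis.Analysis"
begin

definition hypergraph :: "'a set \<Rightarrow> 'a set set \<Rightarrow> ('a set \<Rightarrow> real) \<Rightarrow> bool" where
  "hypergraph V E w \<longleftrightarrow> finite V \<and> finite E \<and> (\<forall>e\<in>E. e \<subseteq> V \<and> e \<noteq> {}) \<and> (\<forall>e\<in>E. w e > 0)"

definition hdeg :: "'a set set \<Rightarrow> ('a set \<Rightarrow> real) \<Rightarrow> 'a \<Rightarrow> real" where
  "hdeg E w v = (\<Sum>e\<in>{e\<in>E. v \<in> e}. w e)"

definition hvol :: "'a set set \<Rightarrow> ('a set \<Rightarrow> real) \<Rightarrow> 'a set \<Rightarrow> real" where
  "hvol E w S = (\<Sum>v\<in>S. hdeg E w v)"

definition hw :: "'a set set \<Rightarrow> ('a set \<Rightarrow> real) \<Rightarrow> 'a set \<Rightarrow> 'a set \<Rightarrow> 'a set \<Rightarrow> real" where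
  "hw E w A B C = (\<Sum>e\<in>{e\<in>E. e \<inter> A \<noteq> {} \<and> e \<inter> B \<noteq> {} \<and> e \<inter> C = {}}. w e)"

definition bip_ratio :: "'a set \<Rightarrow> 'a set set \<Rightarrow> ('a set \<Rightarrow> real) \<Rightarrow> 'a set \<Rightarrow> 'a set \<Rightarrow> real" where
  "bip_ratio V E w L R =
     (2 * hw E w L L (V - L) + 2 * hw E w R R (V - R)
      + hw E w L (V - (L \<union> R)) R + hw E w R (V - (L \<union> R)) L) / hvol E w (L \<union> R)"

definition Dq :: "'a set \<Rightarrow> 'a set set \<Rightarrow> ('a set \<Rightarrow> real) \<Rightarrow> ('a \<Rightarrow> real) \<Rightarrow> real" where
  "Dq V E w f =
     (\<Sum>e\<in>E. w e * (Max (f ` e) + Min (f ` e))\<^sup>2) / (\<Sum>v\<in>V. hdeg E w v * (f v)\<^sup>2)"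

definition gamma1 :: "'a set \<Rightarrow> 'a set set \<Rightarrow> ('a set \<Rightarrow> real) \<Rightarrow> real" where
  "gamma1 V E w = Inf {Dq V E w f | f. (\<Sum>v\<in>V. hdeg E w v * (f v)\<^sup>2) > 0}"

end

theory Submission
  imports Defs
begin

lemma edge_bound:
  fixes V e L R :: "'a set"
  assumes e: "e \<subseteq> V" "e \<noteq> {}" "finite V" and LR: "L \<subseteq> V" "R \<subseteq> V" "L \<inter> R = {}"
  defines "f \<equiv> (\<lambda>v. if v \<in> L then (1::real) else if v \<in> R then -1 else 0)"
  shows "(Max (f ` e) + Min (f ` e))\<^sup>2 \<le> 2 * (2 * (if e \<inter> L \<noteq> {} \<and> e \<inter> L \<noteq> {} \<and> e \<inter> (V - L) = {} then 1 else 0)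
     + 2 * (if e \<inter> R \<noteq> {} \<and> e \<inter> R \<noteq> {} \<and> e \<inter> (V - R) = {} then 1 else 0)
     + (if e \<inter> L \<noteq> {} \<and> e \<inter> (V - (L \<union> R)) \<noteq> {} \<and> e \<inter> R = {} then 1 else 0)
     + (if e \<inter> R \<noteq> {} \<and> e \<inter> (V - (L \<union> R)) \<noteq> {} \<and> e \<inter> L = {} then 1 else 0))"
proof -
  have fin: "finite (f ` e)" using e finite_subset by blast
  have ne: "f ` e \<noteq> {}" using e by auto
  have mx: "Max (f ` e) = (if e \<inter> L \<noteq> {} then 1 else if e \<inter> (V - (L \<union> R)) \<noteq> {} then 0 else -1)"
  proof (rule Max_eqI[OF fin])
    fix y assume "y \<in> f ` e" then show "y \<le> (if e \<inter> L \<noteq> {} then 1 else if e \<inter> (V - (L \<union> R)) \<noteq> {} then 0 else -1)"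
      using e LR unfolding f_def by (auto split: if_splits)
  next
    show "(if e \<inter> L \<noteq> {} then 1 else if e \<inter> (V - (L \<union> R)) \<noteq> {} then 0 else -1) \<in> f ` e"
      using e LR unfolding f_def by (auto simp: image_iff) blast
  qed
  have mn: "Min (f ` e) = (if e \<inter> R \<noteq> {} then -1 else if e \<inter> (V - (L \<union> R)) \<noteq> {} then 0 else 1)"
  proof (rule Min_eqI[OF fin])
    fix y assume "y \<in> f ` e" then show "y \<ge> (if e \<inter> R \<noteq> {} then -1 else if e \<inter> (V - (L \<union> R)) \<noteq> {} then 0 else 1)"
      using e LR unfolding f_def by (auto split: if_splits)
  next
    show "(if e \<inter> R \<noteq> {} then -1 else if e \<inter> (V - (L \<union> R)) \<noteq> {} then 0 else 1) \<in> f ` e"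
      using e LR unfolding f_def by (auto simp: image_iff)
  qed
  show ?thesis unfolding mx mn using e LR by (auto split: if_splits)
qed

theorem lemma13:
  fixes V :: "'a set" and E :: "'a set set" and w :: "'a set \<Rightarrow> real" and L R :: "'a set"
  assumes "hypergraph V E w"
    and "L \<subseteq> V" and "R \<subseteq> V" and "L \<inter> R = {}"
    and "hvol E w (L \<union> R) > 0"
  shows "gamma1 V E w \<le> 2 * bip_ratio V E w L R"
proof -
  have H: "finite V" "finite E" "\<And>e. e \<in> E \<Longrightarrow> e \<subseteq> V \<and> e \<noteq> {}" "\<And>e. e \<in> E \<Longrightarrow> w e > 0"
    using assms(1) unfolding hypergraph_def by auto
  define f where "f \<equiv> (\<lambda>v. if v \<in> L then (1::real) else if v \<in> R then -1 else 0)"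
  have degnn: "\<And>v. hdeg E w v \<ge> 0" unfolding hdeg_def using H(4) by (intro sum_nonneg) (simp add: less_imp_le)
  have den: "(\<Sum>v\<in>V. hdeg E w v * (f v)\<^sup>2) = hvol E w (L \<union> R)"
  proof -
    have "(\<Sum>v\<in>V. hdeg E w v * (f v)\<^sup>2) = (\<Sum>v\<in>V. if v \<in> L \<union> R then hdeg E w v else 0)"
      by (rule sum.cong) (auto simp: f_def)
    also have "\<dots> = (\<Sum>v\<in>V \<inter> (L \<union> R). hdeg E w v)" by (simp add: sum.inter_restrict H(1))
    also have "V \<inter> (L \<union> R) = L \<union> R" using assms(2,3) by auto
    finally show ?thesis unfolding hvol_def .
  qed
  define hwi where "hwi A B C (e::'a set) = (if e \<inter> A \<noteq> {} \<and> e \<inter> B \<noteq> {} \<and> e \<inter> C = {} then 1 else (0::real))" for A B C e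
  have hwE: "hw E w A B C = (\<Sum>e\<in>E. w e * hwi A B C e)" for A B C
    unfolding hw_def hwi_def by (simp add: sum.inter_filter H(2) if_distrib cong: if_cong)
  have num: "(\<Sum>e\<in>E. w e * (Max (f ` e) + Min (f ` e))\<^sup>2) \<le>
      2 * (2 * hw E w L L (V - L) + 2 * hw E w R R (V - R)
      + hw E w L (V - (L \<union> R)) R + hw E w R (V - (L \<union> R)) L)"
  proof -
    have "(\<Sum>e\<in>E. w e * (Max (f ` e) + Min (f ` e))\<^sup>2) \<le>
       (\<Sum>e\<in>E. w e * (2 * (2 * hwi L L (V - L) e + 2 * hwi R R (V - R) e
        + hwi L (V - (L \<union> R)) R e + hwi R (V - (L \<union> R)) L e)))"
    proof (rule sum_mono)
      fix e assume "e \<in> E"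
      then show "w e * (Max (f ` e) + Min (f ` e))\<^sup>2 \<le> w e * (2 * (2 * hwi L L (V - L) e + 2 * hwi R R (V - R) e
        + hwi L (V - (L \<union> R)) R e + hwi R (V - (L \<union> R)) L e))"
        using edge_bound[of e V L R] H assms(2-4) unfolding hwi_def f_def
        by (intro mult_left_mono) (auto simp: less_imp_le)
    qed
    also have "\<dots> = 2 * (2 * hw E w L L (V - L) + 2 * hw E w R R (V - R)
      + hw E w L (V - (L \<union> R)) R + hw E w R (V - (L \<union> R)) L)"
      unfolding hwE by (simp add: sum.distrib sum_distrib_left algebra_simps)
    finally show ?thesis .
  qed
  have mem: "Dq V E w f \<in> {Dq V E w f | f. (\<Sum>v\<in>V. hdeg E w v * (f v)\<^sup>2) > 0}"
    using den assms(5) by auto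
  have bdd: "bdd_below {Dq V E w f | f. (\<Sum>v\<in>V. hdeg E w v * (f v)\<^sup>2) > 0}"
  proof (rule bdd_belowI[of _ 0])
    fix x assume "x \<in> {Dq V E w f | f. (\<Sum>v\<in>V. hdeg E w v * (f v)\<^sup>2) > 0}"
    then obtain g where "x = Dq V E w g" "(\<Sum>v\<in>V. hdeg E w v * (g v)\<^sup>2) > 0" by auto
    moreover have "(\<Sum>e\<in>E. w e * (Max (g ` e) + Min (g ` e))\<^sup>2) \<ge> 0"
      using H(4) by (intro sum_nonneg) (simp add: less_imp_le)
    ultimately show "0 \<le> x" unfolding Dq_def by simp
  qed
  have "gamma1 V E w \<le> Dq V E w f" unfolding gamma1_def by (rule cInf_lower[OF mem bdd])
  also have "Dq V E w f \<le> 2 * bip_ratio V E w L R"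
    unfolding Dq_def bip_ratio_def den using num assms(5)
    by (simp add: divide_right_mono)
  finally show ?thesis .
qed

end
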